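(* Let $\varepsilon\ge0$ and let $X$ be any random variable taking values in $[d]$. If $\mathbf Z=(Z_1,\dots,Z_d)$ is obtained from $X$ by the unary-encoding mechanism with parameter $\varepsilon$, then $\{Z_1,\dots,Z_d\}$ is negatively associated.
   Context: Unary encoding with parameter $\varepsilon$: given $X=x\in[d]$, the coordinates $Z_1,\dots,Z_d$ are conditionally independent with $Z_j=\mathbb 1\{x=j\}$ with probability $\omega_{\varepsilon/2}$ and $Z_j=1-\mathbb 1\{x=j\}$ with probability $1-\omega_{\varepsilon/2}$, where $\omega_{\varepsilon/2}=e^{\varepsilon/2}/(e^{\varepsilon/2}+1)$. A collection of random variables $\{X_1,\dots,X_n\}$ is negatively associated if for every pair of disjoint $I_1,I_2\subseteq[n]$ with $I_1\cup I_2=[n]$, $\mathrm{Cov}(f(X_i:i\in I_1),g(X_{i'}:i'\in I_2))\le0$ for all real-valued $f,g$ that are both coordinatewise non-decreasing (equivalently both non-increasing). *)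

theory Defs
  imports "HOL-Probability.Probability"
begin

definition omega :: "real \<Rightarrow> real" where
  "omega t = exp t / (exp t + 1)"

text \<open>Outside {1..d} the vector is 0 (irrelevant default).\<close>
definition unary_enc :: "real \<Rightarrow> nat \<Rightarrow> nat \<Rightarrow> (nat \<Rightarrow> real) pmf" where
  "unary_enc \<epsilon> d x =
     Pi_pmf {1..d} 0
       (\<lambda>j. map_pmf (\<lambda>keep. if keep then (if x = j then 1 else 0)
                                   else 1 - (if x = j then 1 else 0))
                     (bernoulli_pmf (omega (\<epsilon> / 2))))"

definition unary_mech :: "real \<Rightarrow> nat \<Rightarrow> nat pmf \<Rightarrow> (nat \<Rightarrow> real) pmf" where
  "unary_mech \<epsilon> d p = bind_pmf p (unary_enc \<epsilon> d)"

definition cov_pmf :: "'a pmf \<Rightarrow> ('a \<Rightarrow> real) \<Rightarrow> ('a \<Rightarrow> real) \<Rightarrow> real" where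
  "cov_pmf M f g =
     measure_pmf.expectation M (\<lambda>z. f z * g z)
     - measure_pmf.expectation M f * measure_pmf.expectation M g"

text \<open>The random variables Z_i, i in A, jointly distributed as M, are negatively associated:
  for every partition of A into I1, I2 and all coordinatewise non-decreasing real functions
  f of (Z_i : i in I1) and g of (Z_i : i in I2), Cov(f, g) <= 0.
  A function of the sub-vector (Z_i : i in I) is represented as f applied to the vector
  that agrees with Z on I and is 0 elsewhere; "coordinatewise non-decreasing" is mono
  w.r.t. the pointwise order on nat => real.\<close>
definition neg_assoc :: "nat set \<Rightarrow> (nat \<Rightarrow> real) pmf \<Rightarrow> bool" where
  "neg_assoc A M \<longleftrightarrow>
     (\<forall>I1 I2 (f :: (nat \<Rightarrow> real) \<Rightarrow> real) (g :: (nat \<Rightarrow> real) \<Rightarrow> real).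
        I1 \<inter> I2 = {} \<and> I1 \<union> I2 = A \<and> mono f \<and> mono g \<longrightarrow>
        cov_pmf M (\<lambda>z. f (\<lambda>i. if i \<in> I1 then z i else 0))
                  (\<lambda>z. g (\<lambda>i. if i \<in> I2 then z i else 0)) \<le> 0)"

end

theory Submission
  imports Defs
begin

lemma exp_bind_fin:
  fixes f :: "'b \<Rightarrow> real"
  assumes M: "finite (set_pmf M)" and N: "\<And>x. x \<in> set_pmf M \<Longrightarrow> finite (set_pmf (N x))"
  shows "measure_pmf.expectation (bind_pmf M N) f =
         measure_pmf.expectation M (\<lambda>x. measure_pmf.expectation (N x) f)"
proof -
  define S where "S = set_pmf (bind_pmf M N)"
  have S: "finite S" unfolding S_def using M N by (auto simp: set_bind_pmf)
  have "measure_pmf.expectation (bind_pmf M N) f = (\<Sum>a\<in>S. f a * pmf (bind_pmf M N) a)"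
    by (rule integral_measure_pmf_real[OF S]) (auto simp: S_def)
  also have "\<dots> = (\<Sum>a\<in>S. measure_pmf.expectation M (\<lambda>x. f a * pmf (N x) a))"
    by (simp add: pmf_bind)
  also have "\<dots> = measure_pmf.expectation M (\<lambda>x. \<Sum>a\<in>S. f a * pmf (N x) a)"
    by (rule sym, rule Bochner_Integration.integral_sum, rule integrable_measure_pmf_finite[OF M])
  also have "\<dots> = measure_pmf.expectation M (\<lambda>x. measure_pmf.expectation (N x) f)"
  proof (intro integral_cong_AE)
    show "AE x in measure_pmf M. (\<Sum>a\<in>S. f a * pmf (N x) a) = measure_pmf.expectation (N x) f"
      unfolding AE_measure_pmf_iff
    proof
      fix x assume x: "x \<in> set_pmf M"
      show "(\<Sum>a\<in>S. f a * pmf (N x) a) = measure_pmf.expectation (N x) f"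
        by (rule integral_measure_pmf_real[OF S, symmetric]) (use x in \<open>auto simp: S_def set_bind_pmf\<close>)
    qed
  qed auto
  finally show ?thesis .
qed

lemma exp_pair_fin:
  fixes f :: "'a \<Rightarrow> real" and g :: "'b \<Rightarrow> real"
  assumes "finite (set_pmf A)" "finite (set_pmf B)"
  shows "measure_pmf.expectation (pair_pmf A B) (\<lambda>(u,v). f u * g v) =
         measure_pmf.expectation A f * measure_pmf.expectation B g"
proof -
  have "measure_pmf.expectation (pair_pmf A B) (\<lambda>(u,v). f u * g v) =
        measure_pmf.expectation A (\<lambda>u. measure_pmf.expectation (bind_pmf B (\<lambda>v. return_pmf (u, v))) (\<lambda>(u,v). f u * g v))"
    unfolding pair_pmf_def using assms by (intro exp_bind_fin) (auto simp: set_bind_pmf)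
  also have "\<dots> = measure_pmf.expectation A (\<lambda>u. measure_pmf.expectation B (\<lambda>v. f u * g v))"
    using assms by (subst exp_bind_fin) auto
  also have "\<dots> = measure_pmf.expectation A f * measure_pmf.expectation B g"
    by simp
  finally show ?thesis .
qed

definition uq :: "real \<Rightarrow> nat \<Rightarrow> nat \<Rightarrow> real pmf" where
  "uq \<epsilon> x j = map_pmf (\<lambda>keep. if keep then (if x = j then 1 else 0)
                                   else 1 - (if x = j then 1 else 0))
                     (bernoulli_pmf (omega (\<epsilon> / 2)))"

lemma unary_enc_uq: "unary_enc \<epsilon> d x = Pi_pmf {1..d} 0 (uq \<epsilon> x)"
  unfolding unary_enc_def uq_def by simp

lemma fin_uq: "finite (set_pmf (uq \<epsilon> x j))"
  unfolding uq_def by (rule finite_subset[of _ "(\<lambda>keep::bool. if keep then (if x = j then 1 else 0)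
                                   else 1 - (if x = j then 1 else 0)) ` UNIV"]) auto

lemma fin_Pi: "finite I \<Longrightarrow> finite (set_pmf (Pi_pmf I (0::real) (uq \<epsilon> x)))"
  by (subst set_Pi_pmf) (auto intro!: finite_PiE_dflt fin_uq)

lemma omega_bounds: "\<epsilon> \<ge> 0 \<Longrightarrow> 1/2 \<le> omega (\<epsilon>/2) \<and> omega (\<epsilon>/2) \<le> 1"
proof -
  assume "\<epsilon> \<ge> 0"
  then have e: "exp (\<epsilon>/2) \<ge> 1" by simp
  have p: "exp (\<epsilon>/2) + 1 > 0" by (simp add: add_pos_pos)
  show ?thesis unfolding omega_def using e p by (simp add: le_divide_eq divide_le_eq)
qed

lemma Pi_uq_eq: "finite I \<Longrightarrow> x \<notin> I \<Longrightarrow> y \<notin> I \<Longrightarrow>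
   Pi_pmf I (0::real) (uq \<epsilon> x) = Pi_pmf I 0 (uq \<epsilon> y)"
  by (intro Pi_pmf_cong) (auto simp: uq_def)

lemma Pi_uq_mono:
  fixes f :: "(nat \<Rightarrow> real) \<Rightarrow> real"
  assumes I: "finite I" and f: "mono f" and e: "\<epsilon> \<ge> 0" and x: "x \<in> I" and y: "y \<notin> I"
  shows "measure_pmf.expectation (Pi_pmf I 0 (uq \<epsilon> y)) f \<le> measure_pmf.expectation (Pi_pmf I 0 (uq \<epsilon> x)) f"
proof -
  define J where "J = I - {x}"
  have IJ: "I = insert x J" "x \<notin> J" "finite J" using x I by (auto simp: J_def)
  define R where "R = Pi_pmf J (0::real) (uq \<epsilon> y)"
  have RR: "Pi_pmf J 0 (uq \<epsilon> x) = R" unfolding R_def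
    by (intro Pi_pmf_cong) (use y IJ in \<open>auto simp: uq_def\<close>)
  have finR: "finite (set_pmf R)" unfolding R_def using IJ by (intro fin_Pi)
  define \<phi> where "\<phi> b = measure_pmf.expectation R (\<lambda>h. f (h(x:=b)))" for b
  have gen: "measure_pmf.expectation (Pi_pmf I 0 (uq \<epsilon> z)) f = measure_pmf.expectation (uq \<epsilon> z x) \<phi>"
    if "Pi_pmf J 0 (uq \<epsilon> z) = R" for z
  proof -
    have "Pi_pmf I 0 (uq \<epsilon> z) = do {b \<leftarrow> uq \<epsilon> z x; h \<leftarrow> R; return_pmf (h(x := b))}"
      unfolding IJ(1) by (subst Pi_pmf_insert') (use IJ that in auto)
    also have "measure_pmf.expectation \<dots> f = measure_pmf.expectation (uq \<epsilon> z x)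
         (\<lambda>b. measure_pmf.expectation (do {h \<leftarrow> R; return_pmf (h(x := b))}) f)"
      by (rule exp_bind_fin) (auto simp: fin_uq finR set_bind_pmf)
    also have "\<dots> = measure_pmf.expectation (uq \<epsilon> z x) \<phi>"
      unfolding \<phi>_def by (subst exp_bind_fin) (auto simp: finR)
    finally show ?thesis .
  qed
  have "\<phi> 0 \<le> \<phi> 1" unfolding \<phi>_def
    by (intro integral_mono integrable_measure_pmf_finite finR monoD[OF f]) (auto simp: le_fun_def)
  moreover have "measure_pmf.expectation (uq \<epsilon> x x) \<phi> = \<phi> 1 * omega (\<epsilon>/2) + \<phi> 0 * (1 - omega (\<epsilon>/2))"
    using omega_bounds[OF e] by (simp add: uq_def)
  moreover have "measure_pmf.expectation (uq \<epsilon> y x) \<phi> = \<phi> 0 * omega (\<epsilon>/2) + \<phi> 1 * (1 - omega (\<epsilon>/2))"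
    using omega_bounds[OF e] x y by (auto simp add: uq_def)
  moreover have "(\<phi> 1 - \<phi> 0) * (2 * omega (\<epsilon>/2) - 1) \<ge> 0"
    using omega_bounds[OF e] \<open>\<phi> 0 \<le> \<phi> 1\<close> by (intro mult_nonneg_nonneg) auto
  moreover have "(\<phi> 1 * omega (\<epsilon>/2) + \<phi> 0 * (1 - omega (\<epsilon>/2))) - (\<phi> 0 * omega (\<epsilon>/2) + \<phi> 1 * (1 - omega (\<epsilon>/2)))
     = (\<phi> 1 - \<phi> 0) * (2 * omega (\<epsilon>/2) - 1)" by (simp add: algebra_simps)
  moreover have "measure_pmf.expectation (Pi_pmf I 0 (uq \<epsilon> x)) f = measure_pmf.expectation (uq \<epsilon> x x) \<phi>"
    by (rule gen[OF RR])
  moreover have "measure_pmf.expectation (Pi_pmf I 0 (uq \<epsilon> y)) f = measure_pmf.expectation (uq \<epsilon> y x) \<phi>"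
    by (rule gen) (simp add: R_def)
  ultimately show ?thesis by linarith
qed

lemma Pi_split:
  fixes f g :: "(nat \<Rightarrow> real) \<Rightarrow> real"
  assumes A: "finite A" and B: "finite B" and AB: "A \<inter> B = {}"
  shows "measure_pmf.expectation (Pi_pmf (A \<union> B) 0 (uq \<epsilon> x))
           (\<lambda>z. f (\<lambda>i. if i \<in> A then z i else 0) * g (\<lambda>i. if i \<in> B then z i else 0))
         = measure_pmf.expectation (Pi_pmf A 0 (uq \<epsilon> x)) f * measure_pmf.expectation (Pi_pmf B 0 (uq \<epsilon> x)) g"
    and "measure_pmf.expectation (Pi_pmf (A \<union> B) 0 (uq \<epsilon> x)) (\<lambda>z. f (\<lambda>i. if i \<in> A then z i else 0))
         = measure_pmf.expectation (Pi_pmf A 0 (uq \<epsilon> x)) f"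
proof -
  show "measure_pmf.expectation (Pi_pmf (A \<union> B) 0 (uq \<epsilon> x)) (\<lambda>z. f (\<lambda>i. if i \<in> A then z i else 0))
         = measure_pmf.expectation (Pi_pmf A 0 (uq \<epsilon> x)) f"
    by (subst Pi_pmf_subset[of "A \<union> B" A]) (use A B in auto)
  have "measure_pmf.expectation (Pi_pmf (A \<union> B) 0 (uq \<epsilon> x))
           (\<lambda>z. f (\<lambda>i. if i \<in> A then z i else 0) * g (\<lambda>i. if i \<in> B then z i else 0))
      = measure_pmf.expectation (pair_pmf (Pi_pmf A 0 (uq \<epsilon> x)) (Pi_pmf B 0 (uq \<epsilon> x))) (\<lambda>(u,v). f u * g v)"
  proof (subst Pi_pmf_union[OF A B AB], simp only: integral_map_pmf, intro integral_cong_AE)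
    show "AE w in measure_pmf (pair_pmf (Pi_pmf A 0 (uq \<epsilon> x)) (Pi_pmf B 0 (uq \<epsilon> x))).
      f (\<lambda>i. if i \<in> A then (case w of (f, g) \<Rightarrow> \<lambda>x. if x \<in> A then f x else g x) i else 0) *
      g (\<lambda>i. if i \<in> B then (case w of (f, g) \<Rightarrow> \<lambda>x. if x \<in> A then f x else g x) i else 0) =
      (case w of (u, v) \<Rightarrow> f u * g v)"
      unfolding AE_measure_pmf_iff
    proof (intro ballI)
      fix w assume "w \<in> set_pmf (pair_pmf (Pi_pmf A 0 (uq \<epsilon> x)) (Pi_pmf B 0 (uq \<epsilon> x)))"
      then obtain u v where w: "w = (u,v)" and u: "\<forall>i. i \<notin> A \<longrightarrow> u i = 0" and v: "\<forall>i. i \<notin> B \<longrightarrow> v i = 0"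
        using set_Pi_pmf_subset[OF A, of 0 "uq \<epsilon> x"] set_Pi_pmf_subset[OF B, of 0 "uq \<epsilon> x"] by (cases w) force
      have 1: "(\<lambda>i. if i \<in> A then (if i \<in> A then u i else v i) else 0) = u" using u by auto
      have 2: "(\<lambda>i. if i \<in> B then (if i \<in> A then u i else v i) else 0) = v" using v AB by (intro ext) auto
      show "f (\<lambda>i. if i \<in> A then (case w of (f, g) \<Rightarrow> \<lambda>x. if x \<in> A then f x else g x) i else 0) *
      g (\<lambda>i. if i \<in> B then (case w of (f, g) \<Rightarrow> \<lambda>x. if x \<in> A then f x else g x) i else 0) =
      (case w of (u, v) \<Rightarrow> f u * g v)" by (simp only: w prod.case 1 2)
    qed
  qed auto
  also have "\<dots> = measure_pmf.expectation (Pi_pmf A 0 (uq \<epsilon> x)) f * measure_pmf.expectation (Pi_pmf B 0 (uq \<epsilon> x)) g"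
    by (rule exp_pair_fin) (auto intro: fin_Pi A B)
  finally show "measure_pmf.expectation (Pi_pmf (A \<union> B) 0 (uq \<epsilon> x))
           (\<lambda>z. f (\<lambda>i. if i \<in> A then z i else 0) * g (\<lambda>i. if i \<in> B then z i else 0))
         = measure_pmf.expectation (Pi_pmf A 0 (uq \<epsilon> x)) f * measure_pmf.expectation (Pi_pmf B 0 (uq \<epsilon> x)) g" .
qed

theorem mainTheorem9:
  fixes \<epsilon> :: real and d :: nat and p :: "nat pmf"
  assumes "\<epsilon> \<ge> 0"
    and "set_pmf p \<subseteq> {1..d}"
  shows "neg_assoc {1..d} (unary_mech \<epsilon> d p)"
  unfolding neg_assoc_def
proof (intro allI impI, elim conjE)
  fix I1 I2 :: "nat set" and f g :: "(nat \<Rightarrow> real) \<Rightarrow> real"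
  assume dis: "I1 \<inter> I2 = {}" and un: "I1 \<union> I2 = {1..d}" and f: "mono f" and g: "mono g"
  have "finite (I1 \<union> I2)" by (simp add: un)
  then have fin1: "finite I1" and fin2: "finite I2" by simp_all
  have finp: "finite (set_pmf p)" using assms(2) finite_subset by blast
  define Fx where "Fx x = measure_pmf.expectation (Pi_pmf I1 0 (uq \<epsilon> x)) f" for x
  define Gx where "Gx x = measure_pmf.expectation (Pi_pmf I2 0 (uq \<epsilon> x)) g" for x
  define F where "F z = f (\<lambda>i. if i \<in> I1 then z i else 0)" for z :: "nat \<Rightarrow> real"
  define G where "G z = g (\<lambda>i. if i \<in> I2 then z i else 0)" for z :: "nat \<Rightarrow> real"
  have K: "unary_enc \<epsilon> d x = Pi_pmf (I1 \<union> I2) 0 (uq \<epsilon> x)" for x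
    by (simp only: unary_enc_uq un)
  have K': "unary_enc \<epsilon> d x = Pi_pmf (I2 \<union> I1) 0 (uq \<epsilon> x)" for x
    by (simp only: unary_enc_uq Un_commute[of I2 I1] un)
  have bind: "measure_pmf.expectation (unary_mech \<epsilon> d p) h =
      measure_pmf.expectation p (\<lambda>x. measure_pmf.expectation (unary_enc \<epsilon> d x) h)" for h :: "(nat \<Rightarrow> real) \<Rightarrow> real"
    unfolding unary_mech_def by (rule exp_bind_fin[OF finp]) (simp add: unary_enc_uq fin_Pi)
  have EF: "measure_pmf.expectation (unary_mech \<epsilon> d p) F = measure_pmf.expectation p Fx"
    unfolding bind K F_def Fx_def using Pi_split(2)[OF fin1 fin2 dis] by simp
  have EG: "measure_pmf.expectation (unary_mech \<epsilon> d p) G = measure_pmf.expectation p Gx"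
    unfolding bind K' G_def Gx_def using Pi_split(2)[OF fin2 fin1] dis by (simp add: Int_commute)
  have EFG: "measure_pmf.expectation (unary_mech \<epsilon> d p) (\<lambda>z. F z * G z) = measure_pmf.expectation p (\<lambda>x. Fx x * Gx x)"
    unfolding bind K F_def G_def Fx_def Gx_def using Pi_split(1)[OF fin1 fin2 dis] by simp
  have n1: "0 \<notin> I1" and n2: "0 \<notin> I2"
  proof -
    have "0 \<notin> {1..d::nat}" by simp
    then show "0 \<notin> I1" "0 \<notin> I2" unfolding un[symmetric] by blast+
  qed
  define F0 where "F0 = Fx 0"
  define G0 where "G0 = Gx 0"
  have Fge: "F0 \<le> Fx x" if "x \<in> set_pmf p" for x
  proof (cases "x \<in> I1")
    case True thus ?thesis unfolding F0_def Fx_def using Pi_uq_mono[OF fin1 f assms(1) True n1] by simp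
  next
    case False thus ?thesis unfolding F0_def Fx_def using Pi_uq_eq[OF fin1 False n1] by simp
  qed
  have Gge: "G0 \<le> Gx x" if "x \<in> set_pmf p" for x
  proof (cases "x \<in> I2")
    case True thus ?thesis unfolding G0_def Gx_def using Pi_uq_mono[OF fin2 g assms(1) True n2] by simp
  next
    case False thus ?thesis unfolding G0_def Gx_def using Pi_uq_eq[OF fin2 False n2] by simp
  qed
  have prod0: "Fx x * Gx x = F0 * Gx x + G0 * Fx x - F0 * G0" if "x \<in> set_pmf p" for x
  proof -
    have "x \<in> I1 \<union> I2" using that assms(2) un by auto
    have "Fx x = F0 \<or> Gx x = G0"
    proof (cases "x \<in> I1")
      case True
      then have "x \<notin> I2" using dis by blast
      then show ?thesis unfolding G0_def Gx_def using Pi_uq_eq[OF fin2 _ n2] by simp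
    next
      case False
      then show ?thesis unfolding F0_def Fx_def using Pi_uq_eq[OF fin1 _ n1] by simp
    qed
    then show ?thesis by (auto simp: algebra_simps)
  qed
  have int: "integrable (measure_pmf p) h" for h :: "nat \<Rightarrow> real"
    by (rule integrable_measure_pmf_finite[OF finp])
  have "measure_pmf.expectation p (\<lambda>x. Fx x * Gx x) =
        measure_pmf.expectation p (\<lambda>x. F0 * Gx x + G0 * Fx x - F0 * G0)"
    by (intro integral_cong_AE) (auto simp: AE_measure_pmf_iff prod0)
  also have "\<dots> = F0 * measure_pmf.expectation p Gx + G0 * measure_pmf.expectation p Fx - F0 * G0"
    by (simp add: int)
  finally have E: "measure_pmf.expectation p (\<lambda>x. Fx x * Gx x) =
     F0 * measure_pmf.expectation p Gx + G0 * measure_pmf.expectation p Fx - F0 * G0" .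
  have a: "F0 \<le> measure_pmf.expectation p Fx"
    by (rule measure_pmf.integral_ge_const[OF int]) (auto simp: AE_measure_pmf_iff Fge)
  have b: "G0 \<le> measure_pmf.expectation p Gx"
    by (rule measure_pmf.integral_ge_const[OF int]) (auto simp: AE_measure_pmf_iff Gge)
  have "cov_pmf (unary_mech \<epsilon> d p) F G =
     - ((measure_pmf.expectation p Fx - F0) * (measure_pmf.expectation p Gx - G0))"
    unfolding cov_pmf_def EF EG EFG E by (simp add: algebra_simps)
  also have "\<dots> \<le> 0" using a b by simp
  finally show "cov_pmf (unary_mech \<epsilon> d p) (\<lambda>z. f (\<lambda>i. if i \<in> I1 then z i else 0))
          (\<lambda>z. g (\<lambda>i. if i \<in> I2 then z i else 0)) \<le> 0" unfolding F_def G_def .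
qed

end
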